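(* Let $4\le k\le n-1$ and let $\mathcal X$ be an $n$-independent set of $d(n,k-3)+3$ nodes such that there are seven linearly independent polynomials in $\Pi_k$ vanishing on $\mathcal X$. Then there are three linearly independent polynomials in $\Pi_{k-1}$ vanishing at all nodes of $\mathcal X$.
   Context: $\Pi_m$ denotes the space of real bivariate polynomials of total degree at most $m$; $N_m=\frac12(m+1)(m+2)$ and $d(n,k):=N_n-N_{n-k}=\frac12 k(2n+3-k)$. For a finite node set $\mathcal X$ and $A\in\mathcal X$, $p\in\Pi_n$ is an $n$-fundamental polynomial of $A$ if $p(A)=1$ and $p$ vanishes on $\mathcal X\setminus\{A\}$; $\mathcal X$ is $n$-independent if every node has an $n$-fundamental polynomial. *)

theory Defs
  imports Complex_Main
begin

definition Pi_deg :: "nat \<Rightarrow> (real \<times> real \<Rightarrow> real) set" where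
  "Pi_deg m = {p. \<exists>c :: nat \<Rightarrow> nat \<Rightarrow> real.
      p = (\<lambda>(x, y). \<Sum>(i, j) \<in> {(i, j). i + j \<le> m}. c i j * x ^ i * y ^ j)}"

definition N_dim :: "nat \<Rightarrow> nat" where
  "N_dim m = (m + 1) * (m + 2) div 2"

definition d_fun :: "nat \<Rightarrow> nat \<Rightarrow> nat" where
  "d_fun n k = N_dim n - N_dim (n - k)"

definition fundamental_poly :: "nat \<Rightarrow> (real \<times> real) set \<Rightarrow> real \<times> real \<Rightarrow> (real \<times> real \<Rightarrow> real) \<Rightarrow> bool" where
  "fundamental_poly n X A p \<longleftrightarrow> p \<in> Pi_deg n \<and> p A = 1 \<and> (\<forall>B \<in> X - {A}. p B = 0)"

definition n_independent :: "nat \<Rightarrow> (real \<times> real) set \<Rightarrow> bool" where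
  "n_independent n X \<longleftrightarrow> (\<forall>A \<in> X. \<exists>p. fundamental_poly n X A p)"

definition lin_indep_fam :: "nat \<Rightarrow> (nat \<Rightarrow> real \<times> real \<Rightarrow> real) \<Rightarrow> bool" where
  "lin_indep_fam r P \<longleftrightarrow>
     (\<forall>a :: nat \<Rightarrow> real. (\<forall>z. (\<Sum>i<r. a i * P i z) = 0) \<longrightarrow> (\<forall>i<r. a i = 0))"

definition has_indep_vanishing :: "nat \<Rightarrow> nat \<Rightarrow> (real \<times> real) set \<Rightarrow> bool" where
  "has_indep_vanishing r m X \<longleftrightarrow>
     (\<exists>P. (\<forall>i<r. P i \<in> Pi_deg m \<and> (\<forall>B \<in> X. P i B = 0)) \<and> lin_indep_fam r P)"

end

theory Submission
  imports Defs "HOL-Library.Product_Lexorder"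
begin

definition TT :: "nat \<Rightarrow> (nat \<times> nat) set" where
  "TT N = {(i, j). i + j \<le> N}"

definition ev :: "nat \<Rightarrow> (nat \<times> nat \<Rightarrow> real) \<Rightarrow> real \<times> real \<Rightarrow> real" where
  "ev N c = (\<lambda>(x, y). \<Sum>\<mu>\<in>TT N. c \<mu> * x ^ fst \<mu> * y ^ snd \<mu>)"

lemma TT_finite[simp]: "finite (TT N)"
proof -
  have "TT N \<subseteq> {..N} \<times> {..N}" by (auto simp: TT_def)
  then show ?thesis by (rule finite_subset) auto
qed

lemma TT_mono: "N \<le> M \<Longrightarrow> TT N \<subseteq> TT M"
  by (auto simp: TT_def)

lemma Pi_deg_ev: "p \<in> Pi_deg m \<longleftrightarrow> (\<exists>c. p = ev m c)"
proof
  assume "p \<in> Pi_deg m"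
  then obtain c where "p = (\<lambda>(x, y). \<Sum>(i, j) \<in> {(i, j). i + j \<le> m}. c i j * x ^ i * y ^ j)"
    by (auto simp: Pi_deg_def)
  then have "p = ev m (case_prod c)"
    by (auto simp: ev_def TT_def split_def fun_eq_iff)
  then show "\<exists>c. p = ev m c" by blast
next
  assume "\<exists>c. p = ev m c"
  then obtain c where "p = ev m c" by blast
  then have "p = (\<lambda>(x, y). \<Sum>(i, j) \<in> {(i, j). i + j \<le> m}. (\<lambda>i j. c (i,j)) i j * x ^ i * y ^ j)"
    by (auto simp: ev_def TT_def split_def fun_eq_iff)
  then show "p \<in> Pi_deg m" unfolding Pi_deg_def mem_Collect_eq by (intro exI[of _ "\<lambda>i j. c (i,j)"]) simp
qed

lemma ev_restrict: "ev N (\<lambda>\<mu>. if \<mu> \<in> TT N then c \<mu> else 0) = ev N c"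
  by (auto simp: ev_def fun_eq_iff intro!: sum.cong)

lemma Pi_deg_ev_supp: "p \<in> Pi_deg m \<longleftrightarrow> (\<exists>c. p = ev m c \<and> (\<forall>\<mu>. \<mu> \<notin> TT m \<longrightarrow> c \<mu> = 0))"
proof
  assume "p \<in> Pi_deg m"
  then obtain c where "p = ev m c" by (auto simp: Pi_deg_ev)
  then show "\<exists>c. p = ev m c \<and> (\<forall>\<mu>. \<mu> \<notin> TT m \<longrightarrow> c \<mu> = 0)"
    by (intro exI[of _ "\<lambda>\<mu>. if \<mu> \<in> TT m then c \<mu> else 0"]) (simp add: ev_restrict)
qed (auto simp: Pi_deg_ev)

lemma ev_mono:
  assumes "\<forall>\<mu>. \<mu> \<in> TT M - TT N \<longrightarrow> c \<mu> = 0" and "N \<le> M"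
  shows "ev M c = ev N c"
  unfolding ev_def fun_eq_iff
  using assms by (auto intro!: sum.mono_neutral_right TT_mono)

lemma ev_lin: "ev N (\<lambda>\<mu>. \<Sum>i\<in>F. a i * c i \<mu>) z = (\<Sum>i\<in>F. a i * ev N (c i) z)"
  by (cases z) (simp add: ev_def sum_distrib_left sum_distrib_right mult.assoc sum.swap[of _ F])

lemma L:
  fixes v :: "'i \<Rightarrow> 'z \<Rightarrow> real"
  assumes "finite Z"
  shows "finite F \<Longrightarrow> card Z < card F \<Longrightarrow>
    \<exists>a. (\<exists>i\<in>F. a i \<noteq> 0) \<and> (\<forall>z\<in>Z. (\<Sum>i\<in>F. a i * v i z) = 0)"
  using assms
proof (induction Z arbitrary: F v rule: finite_induct)
  case empty
  then obtain i where "i \<in> F" by fastforce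
  then show ?case by (intro exI[of _ "\<lambda>_. 1"]) auto
next
  case (insert z Z)
  show ?case
  proof (cases "\<forall>i\<in>F. v i z = 0")
    case True
    obtain a where a: "\<exists>i\<in>F. a i \<noteq> 0" "\<forall>y\<in>Z. (\<Sum>i\<in>F. a i * v i y) = 0"
      using insert.IH[of F v] insert.prems insert.hyps by auto
    then show ?thesis using True by (intro exI[of _ a]) auto
  next
    case False
    then obtain i0 where i0: "i0 \<in> F" "v i0 z \<noteq> 0" by auto
    define v' where "v' i y = v i y - v i z / v i0 z * v i0 y" for i y
    have cF: "card Z < card (F - {i0})"
      using insert.prems insert.hyps i0 by (simp add: card_Diff_singleton)
    obtain a' where a': "\<exists>i\<in>F - {i0}. a' i \<noteq> 0" "\<forall>y\<in>Z. (\<Sum>i\<in>F - {i0}. a' i * v' i y) = 0"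
      using insert.IH[of "F - {i0}" v'] insert.prems(1) cF by auto
    define a where "a i = (if i = i0 then - (\<Sum>j\<in>F - {i0}. a' j * v j z) / v i0 z else a' i)" for i
    have key: "(\<Sum>i\<in>F. a i * v i y) = (\<Sum>i\<in>F - {i0}. a' i * v' i y)" for y
    proof -
      have "(\<Sum>i\<in>F. a i * v i y) = a i0 * v i0 y + (\<Sum>i\<in>F - {i0}. a i * v i y)"
        using i0 insert.prems(1) by (simp add: sum.remove)
      also have "(\<Sum>i\<in>F - {i0}. a i * v i y) = (\<Sum>i\<in>F - {i0}. a' i * v i y)"
        by (auto simp: a_def intro!: sum.cong)
      also have "(\<Sum>i\<in>F - {i0}. a' i * v' i y) = (\<Sum>i\<in>F - {i0}. a' i * v i y)
          - (\<Sum>i\<in>F - {i0}. a' i * v i z) / v i0 z * v i0 y"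
        by (simp add: v'_def algebra_simps sum_subtractf sum_distrib_left sum_divide_distrib sum_distrib_right)
      ultimately show ?thesis by (simp add: a_def)
    qed
    show ?thesis
    proof (intro exI[of _ a] conjI)
      show "\<exists>i\<in>F. a i \<noteq> 0" using a' by (auto simp: a_def)
      show "\<forall>y\<in>insert z Z. (\<Sum>i\<in>F. a i * v i y) = 0"
        using a' i0 by (auto simp: key v'_def)
    qed
  qed
qed

definition key :: "nat \<times> nat \<Rightarrow> nat \<times> nat" where
  "key \<mu> = (fst \<mu> + snd \<mu>, fst \<mu>)"

lemma key_inj: "key \<mu> = key \<nu> \<Longrightarrow> \<mu> = \<nu>"
  by (cases \<mu>; cases \<nu>) (auto simp: key_def)

lemma key_less: "key \<mu> < key \<nu> \<longleftrightarrow>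
   fst \<mu> + snd \<mu> < fst \<nu> + snd \<nu> \<or> (fst \<mu> + snd \<mu> = fst \<nu> + snd \<nu> \<and> fst \<mu> < fst \<nu>)"
  by (auto simp: key_def less_prod_def')

definition addp :: "nat \<times> nat \<Rightarrow> nat \<times> nat \<Rightarrow> nat \<times> nat" where
  "addp \<mu> \<delta> = (fst \<mu> + fst \<delta>, snd \<mu> + snd \<delta>)"

lemma key_addp: "key (addp \<mu> \<delta>) < key (addp \<nu> \<delta>) \<longleftrightarrow> key \<mu> < key \<nu>"
  by (auto simp: key_less addp_def)

definition lead :: "(nat \<times> nat \<Rightarrow> real) \<Rightarrow> nat \<times> nat \<Rightarrow> bool" where
  "lead c \<nu> \<longleftrightarrow> c \<nu> \<noteq> 0 \<and> (\<forall>\<mu>. key \<nu> < key \<mu> \<longrightarrow> c \<mu> = 0)"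

lemma exists_lead:
  assumes "\<forall>\<mu>. \<mu> \<notin> TT N \<longrightarrow> c \<mu> = 0" and "\<exists>\<mu>\<in>TT N. c \<mu> \<noteq> 0"
  shows "\<exists>\<nu>. lead c \<nu>"
proof -
  define K where "K = key ` {\<mu>\<in>TT N. c \<mu> \<noteq> 0}"
  have fK: "finite K" "K \<noteq> {}" using assms(2) by (auto simp: K_def)
  then have "Max K \<in> K" by simp
  then obtain \<nu> where \<nu>: "\<nu> \<in> TT N" "c \<nu> \<noteq> 0" "key \<nu> = Max K" by (auto simp: K_def)
  have "c \<mu> = 0" if "key \<nu> < key \<mu>" for \<mu>
  proof (rule ccontr)
    assume "c \<mu> \<noteq> 0"
    then have "\<mu> \<in> TT N" using assms(1) by blast
    then have "key \<mu> \<in> K" using \<open>c \<mu> \<noteq> 0\<close> by (auto simp: K_def)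
    then have "key \<mu> \<le> Max K" using fK by simp
    then show False using that \<nu> by simp
  qed
  then have "lead c \<nu>" using \<nu>(2) unfolding lead_def by blast
  then show ?thesis by blast
qed

lemma tri:
  assumes "finite U" and "\<forall>\<nu>\<in>U. lead (c \<nu>) \<nu>"
    and "\<forall>\<mu>\<in>U. (\<Sum>\<nu>\<in>U. u \<nu> * c \<nu> \<mu>) = 0"
  shows "\<forall>\<nu>\<in>U. u \<nu> = 0"
proof (rule ccontr)
  assume nt: "\<not> (\<forall>\<nu>\<in>U. u \<nu> = 0)"
  define K where "K = key ` {\<nu>\<in>U. u \<nu> \<noteq> 0}"
  have fK: "finite K" "K \<noteq> {}" using assms(1) nt by (auto simp: K_def)
  then have "Max K \<in> K" by simp
  then obtain \<nu>0 where \<nu>0: "\<nu>0 \<in> U" "u \<nu>0 \<noteq> 0" "key \<nu>0 = Max K" by (auto simp: K_def)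
  have z: "u \<nu> * c \<nu> \<nu>0 = 0" if "\<nu> \<in> U - {\<nu>0}" for \<nu>
  proof (cases "u \<nu> = 0")
    case False
    then have "key \<nu> \<in> K" using that by (auto simp: K_def)
    then have "key \<nu> \<le> key \<nu>0" using fK \<nu>0 by simp
    moreover have "key \<nu> \<noteq> key \<nu>0" using that key_inj by blast
    ultimately have "key \<nu> < key \<nu>0" by simp
    then have "c \<nu> \<nu>0 = 0" using assms(2) that unfolding lead_def by blast
    then show ?thesis by simp
  qed simp
  have "(\<Sum>\<nu>\<in>U. u \<nu> * c \<nu> \<nu>0) = u \<nu>0 * c \<nu>0 \<nu>0 + (\<Sum>\<nu>\<in>U - {\<nu>0}. u \<nu> * c \<nu> \<nu>0)"
    using \<nu>0 assms(1) by (simp add: sum.remove)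
  also have "(\<Sum>\<nu>\<in>U - {\<nu>0}. u \<nu> * c \<nu> \<nu>0) = 0" using z by (intro sum.neutral) blast
  finally have "u \<nu>0 * c \<nu>0 \<nu>0 = 0" using assms(3) \<nu>0 by simp
  then show False using \<nu>0 assms(2) by (auto simp: lead_def)
qed

definition shift :: "nat \<times> nat \<Rightarrow> (nat \<times> nat \<Rightarrow> real) \<Rightarrow> nat \<times> nat \<Rightarrow> real" where
  "shift \<delta> c \<mu> = (if fst \<delta> \<le> fst \<mu> \<and> snd \<delta> \<le> snd \<mu> then c (fst \<mu> - fst \<delta>, snd \<mu> - snd \<delta>) else 0)"

lemma lead_shift: "lead c r \<Longrightarrow> lead (shift \<delta> c) (addp r \<delta>)"
proof -
  assume l: "lead c r"
  have "shift \<delta> c \<mu> = 0" if "key (addp r \<delta>) < key \<mu>" for \<mu>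
  proof (cases "fst \<delta> \<le> fst \<mu> \<and> snd \<delta> \<le> snd \<mu>")
    case True
    define \<mu>' where "\<mu>' = (fst \<mu> - fst \<delta>, snd \<mu> - snd \<delta>)"
    have "\<mu> = addp \<mu>' \<delta>" using True by (auto simp: \<mu>'_def addp_def)
    then have "key r < key \<mu>'" using that key_addp by metis
    then show ?thesis using l True by (simp add: shift_def lead_def \<mu>'_def)
  qed (auto simp: shift_def)
  moreover have "shift \<delta> c (addp r \<delta>) = c r" by (cases r) (simp add: shift_def addp_def)
  ultimately show ?thesis using l by (simp add: lead_def)
qed

lemma shift_supp:
  assumes "\<forall>\<mu>. \<mu> \<notin> TT k \<longrightarrow> c \<mu> = 0" "\<delta> \<in> TT m"
  shows "\<forall>\<mu>. \<mu> \<notin> TT (k + m) \<longrightarrow> shift \<delta> c \<mu> = 0"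
  using assms by (auto simp: shift_def TT_def)

lemma ev_shift:
  assumes "\<forall>\<mu>. \<mu> \<notin> TT k \<longrightarrow> c \<mu> = 0" "\<delta> \<in> TT m"
  shows "ev (k + m) (shift \<delta> c) (x, y) = ev k c (x, y) * x ^ fst \<delta> * y ^ snd \<delta>"
proof -
  let ?f = "\<lambda>\<mu>. addp \<mu> \<delta>"
  have sub: "?f ` TT k \<subseteq> TT (k + m)" using assms(2) by (auto simp: TT_def addp_def)
  have inj: "inj_on ?f (TT k)" by (auto simp: inj_on_def addp_def)
  have zero: "\<forall>i\<in>TT (k + m) - ?f ` TT k. shift \<delta> c i * x ^ fst i * y ^ snd i = 0"
  proof
    fix \<mu> assume \<mu>: "\<mu> \<in> TT (k + m) - ?f ` TT k"
    show "shift \<delta> c \<mu> * x ^ fst \<mu> * y ^ snd \<mu> = 0"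
    proof (cases "fst \<delta> \<le> fst \<mu> \<and> snd \<delta> \<le> snd \<mu>")
      case True
      define \<mu>' where "\<mu>' = (fst \<mu> - fst \<delta>, snd \<mu> - snd \<delta>)"
      have "\<mu> = addp \<mu>' \<delta>" using True by (auto simp: \<mu>'_def addp_def)
      then have "\<mu>' \<notin> TT k" using \<mu> by blast
      then show ?thesis using assms(1) True by (simp add: shift_def \<mu>'_def)
    qed (auto simp: shift_def)
  qed
  have "ev (k + m) (shift \<delta> c) (x, y) = (\<Sum>\<mu>\<in>?f ` TT k. shift \<delta> c \<mu> * x ^ fst \<mu> * y ^ snd \<mu>)"
    unfolding ev_def split_conv by (rule sum.mono_neutral_right[OF TT_finite sub zero])
  also have "\<dots> = (\<Sum>\<mu>\<in>TT k. shift \<delta> c (?f \<mu>) * x ^ fst (?f \<mu>) * y ^ snd (?f \<mu>))"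
    by (rule sum.reindex[OF inj, unfolded comp_def])
  also have "\<dots> = (\<Sum>\<mu>\<in>TT k. c \<mu> * x ^ fst \<mu> * y ^ snd \<mu> * (x ^ fst \<delta> * y ^ snd \<delta>))"
    by (intro sum.cong refl) (simp add: shift_def addp_def power_add)
  also have "\<dots> = ev k c (x, y) * x ^ fst \<delta> * y ^ snd \<delta>"
    by (simp add: ev_def sum_distrib_right mult.assoc)
  finally show ?thesis .
qed

lemma card_TT: "card (TT N) = N_dim N"
proof (induction N)
  case 0
  have "TT 0 = {(0,0)}" by (auto simp: TT_def)
  then show ?case by (simp add: N_dim_def)
next
  case (Suc N)
  define Lv where "Lv = (\<lambda>i. (i, Suc N - i)) ` {..Suc N}"
  have "TT (Suc N) = TT N \<union> Lv"
    by (auto simp: TT_def Lv_def image_iff)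
  moreover have "TT N \<inter> Lv = {}" by (auto simp: TT_def Lv_def)
  moreover have "card Lv = Suc (Suc N)"
    unfolding Lv_def by (subst card_image) (auto simp: inj_on_def)
  moreover have "N_dim (Suc N) = N_dim N + Suc (Suc N)"
    by (simp add: N_dim_def)
  ultimately show ?case using Suc by (simp add: card_Un_disjoint Lv_def)
qed


lemma sum_Inl_Inr:
  assumes "finite X" "finite U"
  shows "(\<Sum>i\<in>Inl ` X \<union> Inr ` U. f i) = (\<Sum>x\<in>X. f (Inl x)) + (\<Sum>y\<in>U. f (Inr y))"
  using assms by (subst sum.union_disjoint) (auto simp: sum.reindex)

lemma gauss2: "2 * (\<Sum>j\<le>m. j) = m * (m + 1::nat)"
  by (induction m) auto

lemma N_dim2: "2 * N_dim x = (x + 1) * (x + 2)"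
proof -
  have "even ((x + 1) * (x + 2))" by auto
  then show ?thesis by (simp add: N_dim_def)
qed

lemma N_dim_mono: "x \<le> y \<Longrightarrow> N_dim x \<le> N_dim y"
  unfolding N_dim_def by (intro div_le_mono mult_le_mono) auto

lemma count_U:
  assumes fin: "finite Sl" "finite St"
    and lo: "\<forall>\<nu>\<in>Sl. fst \<nu> + snd \<nu> < k" and top: "\<forall>\<nu>\<in>St. fst \<nu> + snd \<nu> = k"
    and ne: "St \<noteq> {}"
  shows "card Sl + (\<Sum>j\<le>m. card St + j) \<le> card (Sl \<union> {addp r \<delta> |r \<delta>. r \<in> St \<and> \<delta> \<in> TT m})"
proof -
  define U' where "U' = {addp r \<delta> |r \<delta>. r \<in> St \<and> \<delta> \<in> TT m}"
  have finU': "finite U'"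
  proof -
    have "U' = (\<lambda>(r, \<delta>). addp r \<delta>) ` (St \<times> TT m)" by (auto simp: U'_def)
    then show ?thesis using fin by simp
  qed
  define A where "A = fst ` St"
  have injA: "inj_on fst St"
  proof (rule inj_onI)
    fix r r' assume "r \<in> St" "r' \<in> St" "fst r = fst r'"
    then show "r = r'" using top by (metis add_left_cancel prod.collapse)
  qed
  have cA: "card A = card St" unfolding A_def using injA by (rule card_image)
  have finA: "finite A" "A \<noteq> {}" using fin ne by (auto simp: A_def)
  define M where "M = Max A"
  have MA: "M \<in> A" using finA by (simp add: M_def)
  have leM: "a \<le> M" if "a \<in> A" for a using finA that by (simp add: M_def)
  have Ak: "a \<le> k" if "a \<in> A" for a using that top by (auto simp: A_def)
  define W where "W j = (\<lambda>i. (i, k + j - i)) ` (A \<union> {M+1..M+j})" for j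
  have cW: "card (W j) = card St + j" for j
  proof -
    have "card (W j) = card (A \<union> {M+1..M+j})"
      unfolding W_def by (rule card_image) (auto simp: inj_on_def)
    also have "\<dots> = card A + card {M+1..M+j}"
      using finA leM by (intro card_Un_disjoint) fastforce+
    finally show ?thesis using cA by simp
  qed
  have lvW: "fst \<mu> + snd \<mu> = k + j" if \<mu>W: "\<mu> \<in> W j" for \<mu> j
  proof -
    obtain i where i: "i \<in> A \<union> {M+1..M+j}" "\<mu> = (i, k + j - i)" using \<mu>W unfolding W_def by blast
    have "M \<le> k" using Ak[OF MA] .
    then have "i \<le> k + j" using i(1) Ak[of i] by auto
    then show ?thesis using i by simp
  qed
  have WU: "W j \<subseteq> U'" if "j \<le> m" for j
  proof
    fix \<mu> assume "\<mu> \<in> W j"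
    then obtain i where i: "i \<in> A \<union> {M+1..M+j}" "\<mu> = (i, k + j - i)" unfolding W_def by blast
    show "\<mu> \<in> U'"
    proof (cases "i \<in> A")
      case True
      then obtain r where r: "r \<in> St" "i = fst r" by (auto simp: A_def)
      have "\<mu> = addp r (0, j)" using r top i(2) by (cases r) (auto simp: addp_def)
      moreover have "(0, j) \<in> TT m" using that by (simp add: TT_def)
      ultimately show ?thesis using r unfolding U'_def by blast
    next
      case False
      then have ie: "M + 1 \<le> i" "i \<le> M + j" using i by auto
      from MA obtain r where r: "r \<in> St" "M = fst r" by (auto simp: A_def)
      have "snd r = k - M" using r top by fastforce
      then have "\<mu> = addp r (i - M, j - (i - M))" using r ie i(2) Ak[OF MA] by (cases r) (auto simp: addp_def)
      moreover have "(i - M, j - (i - M)) \<in> TT m" using that ie by (simp add: TT_def)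
      ultimately show ?thesis using r unfolding U'_def by blast
    qed
  qed
  have disj: "W i \<inter> W j = {}" if "i \<noteq> j" for i j
  proof -
    have False if "\<mu> \<in> W i" "\<mu> \<in> W j" for \<mu>
      using lvW[OF that(1)] lvW[OF that(2)] \<open>i \<noteq> j\<close> by simp
    then show ?thesis by blast
  qed
  have disj2: "Sl \<inter> (\<Union>j\<le>m. W j) = {}"
  proof -
    have False if "\<mu> \<in> Sl" "\<mu> \<in> W j" for \<mu> j
      using lvW[OF that(2)] lo that(1) by fastforce
    then show ?thesis by blast
  qed
  have finW: "finite (W j)" for j using finA by (simp add: W_def)
  have "card (Sl \<union> (\<Union>j\<le>m. W j)) = card Sl + (\<Sum>j\<le>m. card (W j))"
    using fin finW disj disj2 by (simp add: card_Un_disjoint card_UN_disjoint)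
  also have "(\<Sum>j\<le>m. card (W j)) = (\<Sum>j\<le>m. card St + j)" using cW by simp
  finally have "card Sl + (\<Sum>j\<le>m. card St + j) = card (Sl \<union> (\<Union>j\<le>m. W j))" by simp
  also have "\<dots> \<le> card (Sl \<union> U')"
    using WU fin finU' by (intro card_mono) auto
  finally show ?thesis by (simp add: U'_def)
qed

theorem mainTheorem8:
  fixes n k :: nat and X :: "(real \<times> real) set"
  assumes "4 \<le> k" and "k \<le> n - 1"
    and "finite X" and "card X = d_fun n (k - 3) + 3"
    and "n_independent n X"
    and "has_indep_vanishing 7 k X"
  shows "has_indep_vanishing 3 (k - 1) X"
proof -
  define m where "m = n - k"
  have m1: "1 \<le> m" and nkm: "n = k + m" using assms(1,2) by (auto simp: m_def)
  obtain P where P: "\<forall>i<7. P i \<in> Pi_deg k \<and> (\<forall>B\<in>X. P i B = 0)" and Pind: "lin_indep_fam 7 P"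
    using assms(6) by (auto simp: has_indep_vanishing_def)
  have "\<forall>i. \<exists>c. i < 7 \<longrightarrow> P i = ev k c \<and> (\<forall>\<mu>. \<mu> \<notin> TT k \<longrightarrow> c \<mu> = 0)"
    using P Pi_deg_ev_supp by blast
  from choice[OF this] obtain c where c0: "\<forall>i. i < 7 \<longrightarrow> P i = ev k (c i) \<and> (\<forall>\<mu>. \<mu> \<notin> TT k \<longrightarrow> c i \<mu> = 0)"
    by blast
  have c: "P i = ev k (c i)" "\<And>\<mu>. \<mu> \<notin> TT k \<Longrightarrow> c i \<mu> = 0" if "i < 7" for i
    using c0 that by blast+
  define C where "C a = (\<lambda>\<mu>. \<Sum>i<7. a i * c i \<mu>)" for a
  define comb where "comb a = (\<lambda>z. \<Sum>i<7. a i * P i z)" for a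
  have comb_ev: "comb a = ev k (C a)" for a
  proof
    fix z
    have "ev k (C a) z = (\<Sum>i<7. a i * ev k (c i) z)" unfolding C_def by (rule ev_lin)
    also have "\<dots> = comb a z" unfolding comb_def by (intro sum.cong refl) (simp add: c(1))
    finally show "comb a z = ev k (C a) z" by simp
  qed
  have C_supp: "\<forall>\<mu>. \<mu> \<notin> TT k \<longrightarrow> C a \<mu> = 0" for a
    unfolding C_def by (intro allI impI sum.neutral ballI) (simp add: c(2))
  have comb_X: "\<forall>B\<in>X. comb a B = 0" for a
    unfolding comb_def by (intro sum.neutral ballI) (simp add: P)
  have comb_Pi: "comb a \<in> Pi_deg k" for a using comb_ev by (auto simp: Pi_deg_ev)
  define S where "S = {\<nu>. \<exists>a. lead (C a) \<nu>}"
  have S_TT: "S \<subseteq> TT k"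
  proof
    fix \<nu> assume "\<nu> \<in> S"
    then obtain a where "lead (C a) \<nu>" by (auto simp: S_def)
    then have "C a \<nu> \<noteq> 0" by (simp add: lead_def)
    then show "\<nu> \<in> TT k" using C_supp[of a] by blast
  qed
  have finS: "finite S" using S_TT by (rule finite_subset) simp
  have cardS: "7 \<le> card S"
  proof (rule ccontr)
    assume "\<not> 7 \<le> card S"
    then have "card S < card {..<7::nat}" by simp
    from L[OF finS finite_lessThan this, of "\<lambda>i \<mu>. c i \<mu>"]
    obtain a where a: "\<exists>i\<in>{..<7}. a i \<noteq> 0" "\<forall>\<mu>\<in>S. (\<Sum>i<7. a i * c i \<mu>) = 0"
      by blast
    have Cz: "\<forall>\<mu>\<in>TT k. C a \<mu> = 0"
    proof (rule ccontr)
      assume "\<not> (\<forall>\<mu>\<in>TT k. C a \<mu> = 0)"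
      then obtain \<nu> where l: "lead (C a) \<nu>" using exists_lead[OF C_supp] by blast
      then have "\<nu> \<in> S" by (auto simp: S_def)
      then have "C a \<nu> = 0" using a(2) by (simp add: C_def)
      then show False using l unfolding lead_def by blast
    qed
    have "\<forall>z. (\<Sum>i<7. a i * P i z) = 0"
    proof
      fix z
      have "(\<Sum>i<7. a i * P i z) = ev k (C a) z" using comb_ev[of a] unfolding comb_def by metis
      also have "\<dots> = 0" using Cz by (cases z) (simp add: ev_def)
      finally show "(\<Sum>i<7. a i * P i z) = 0" .
    qed
    then have "\<forall>i<7. a i = 0" using Pind unfolding lin_indep_fam_def by blast
    with a(1) show False by blast
  qed
  define wa where "wa \<nu> = (SOME a. lead (C a) \<nu>)" for \<nu>
  have wa: "lead (C (wa \<nu>)) \<nu>" if "\<nu> \<in> S" for \<nu>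
  proof -
    from that obtain a where "lead (C a) \<nu>" by (auto simp: S_def)
    then show ?thesis unfolding wa_def by (rule someI[where P="\<lambda>a. lead (C a) \<nu>"])
  qed
  define Q where "Q \<nu> = comb (wa \<nu>)" for \<nu>
  define cq where "cq \<nu> = C (wa \<nu>)" for \<nu>
  have Qev: "Q \<nu> = ev k (cq \<nu>)" for \<nu> by (simp add: Q_def cq_def comb_ev)
  have cq_lin: "C (\<lambda>j. \<Sum>i\<in>F. b i * wa (e i) j) \<mu> = (\<Sum>i\<in>F. b i * cq (e i) \<mu>)" for F b e \<mu>
    by (simp add: C_def cq_def sum_distrib_left sum_distrib_right mult.assoc sum.swap[of _ F])
  have comb_lin: "comb (\<lambda>j. \<Sum>i\<in>F. b i * wa (e i) j) z = (\<Sum>i\<in>F. b i * Q (e i) z)" for F b e z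
    by (simp add: comb_def Q_def sum_distrib_left sum_distrib_right mult.assoc sum.swap[of _ F])
  define Sl where "Sl = {\<nu>\<in>S. fst \<nu> + snd \<nu> < k}"
  define St where "St = {\<nu>\<in>S. fst \<nu> + snd \<nu> = k}"
  have SU: "S = Sl \<union> St" "Sl \<inter> St = {}" using S_TT by (auto simp: Sl_def St_def TT_def)
  show ?thesis
  proof (cases "3 \<le> card Sl")
    case True
    obtain S3 where S3: "S3 \<subseteq> Sl" "card S3 = 3" "finite S3"
      using obtain_subset_with_card_n[OF True] by metis
    obtain e where e: "bij_betw e {..<3::nat} S3"
      using ex_bij_betw_nat_finite[OF S3(3)] S3(2) by (auto simp: atLeast0LessThan)
    have eS: "e i \<in> Sl" if "i < 3" for i using e S3(1) that by (auto simp: bij_betw_def)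
    have QPi: "Q \<nu> \<in> Pi_deg (k - 1)" if "\<nu> \<in> Sl" for \<nu>
    proof -
      have l: "lead (cq \<nu>) \<nu>" using wa that by (auto simp: Sl_def cq_def)
      have "\<forall>\<mu>. \<mu> \<in> TT k - TT (k - 1) \<longrightarrow> cq \<nu> \<mu> = 0"
      proof (intro allI impI)
        fix \<mu> assume "\<mu> \<in> TT k - TT (k - 1)"
        then have "fst \<mu> + snd \<mu> = k" by (auto simp: TT_def)
        then have "key \<nu> < key \<mu>" using that by (auto simp: key_less Sl_def)
        then show "cq \<nu> \<mu> = 0" using l unfolding lead_def by blast
      qed
      then have "Q \<nu> = ev (k - 1) (cq \<nu>)" using Qev ev_mono by simp
      then show ?thesis by (auto simp: Pi_deg_ev)
    qed
    show ?thesis unfolding has_indep_vanishing_def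
    proof (intro exI[of _ "\<lambda>i. Q (e i)"] conjI allI impI)
      fix i :: nat assume "i < 3"
      then show "Q (e i) \<in> Pi_deg (k - 1)" using QPi eS by blast
      show "\<forall>B\<in>X. Q (e i) B = 0" using comb_X by (simp add: Q_def)
    next
      show "lin_indep_fam 3 (\<lambda>i. Q (e i))"
        unfolding lin_indep_fam_def
      proof (rule allI, rule impI)
        fix b :: "nat \<Rightarrow> real"
        assume h: "\<forall>z. (\<Sum>i<3. b i * Q (e i) z) = 0"
        define a' where "a' j = (\<Sum>i<3. b i * wa (e i) j)" for j
        have a'_eq: "a' = (\<lambda>j. \<Sum>i<3. b i * wa (e i) j)" by (simp add: fun_eq_iff a'_def)
        have "\<forall>z. (\<Sum>j<7. a' j * P j z) = 0"
          using h comb_lin[of b e "{..<3}"] by (simp add: comb_def a'_def)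
        then have a0: "\<forall>j<7. a' j = 0" using Pind by (auto simp: lin_indep_fam_def)
        define u where "u \<nu> = b (inv_into {..<3} e \<nu>)" for \<nu>
        have ue: "u (e i) = b i" if "i < 3" for i
          using e that by (simp add: u_def bij_betw_def)
        have "\<forall>\<mu>\<in>S3. (\<Sum>\<nu>\<in>S3. u \<nu> * cq \<nu> \<mu>) = 0"
        proof
          fix \<mu>
          have "(\<Sum>\<nu>\<in>S3. u \<nu> * cq \<nu> \<mu>) = (\<Sum>i<3. u (e i) * cq (e i) \<mu>)"
            using sum.reindex_bij_betw[OF e, of "\<lambda>\<nu>. u \<nu> * cq \<nu> \<mu>"] by simp
          also have "\<dots> = (\<Sum>i<3. b i * cq (e i) \<mu>)" using ue by simp
          also have "\<dots> = C a' \<mu>" unfolding a'_eq using cq_lin[of b e "{..<3}" \<mu>] by (rule sym)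
          also have "\<dots> = 0" using a0 by (simp add: C_def)
          finally show "(\<Sum>\<nu>\<in>S3. u \<nu> * cq \<nu> \<mu>) = 0" .
        qed
        moreover have "\<forall>\<nu>\<in>S3. lead (cq \<nu>) \<nu>" using S3(1) wa by (auto simp: Sl_def cq_def)
        ultimately have "\<forall>\<nu>\<in>S3. u \<nu> = 0" using tri[OF S3(3)] by blast
        then show "\<forall>i<3. b i = 0" using ue eS e by (auto simp: bij_betw_def)
      qed
    qed
  next
    case False
    then have s2: "card Sl \<le> 2" by simp
    have finSl: "finite Sl" and finSt: "finite St" using finS by (auto simp: Sl_def St_def)
    have cS: "card S = card Sl + card St" using SU finSl finSt by (simp add: card_Un_disjoint)
    have St_ne: "St \<noteq> {}" using cS cardS s2 by auto
    have "\<forall>A\<in>X. \<exists>w. ev n w A = 1 \<and> (\<forall>B\<in>X - {A}. ev n w B = 0) \<and> (\<forall>\<mu>. \<mu> \<notin> TT n \<longrightarrow> w \<mu> = 0)"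
    proof
      fix A assume "A \<in> X"
      then obtain p where p: "fundamental_poly n X A p" using assms(5) by (auto simp: n_independent_def)
      then obtain w where "p = ev n w" "\<forall>\<mu>. \<mu> \<notin> TT n \<longrightarrow> w \<mu> = 0"
        unfolding fundamental_poly_def Pi_deg_ev_supp by blast
      then show "\<exists>w. ev n w A = 1 \<and> (\<forall>B\<in>X - {A}. ev n w B = 0) \<and> (\<forall>\<mu>. \<mu> \<notin> TT n \<longrightarrow> w \<mu> = 0)"
        using p unfolding fundamental_poly_def by blast
    qed
    then obtain wf where wf: "\<forall>A\<in>X. ev n (wf A) A = 1 \<and> (\<forall>B\<in>X - {A}. ev n (wf A) B = 0) \<and> (\<forall>\<mu>. \<mu> \<notin> TT n \<longrightarrow> wf A \<mu> = 0)"
      by (rule bchoice[THEN exE]) blast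
    define U where "U = Sl \<union> {addp r \<delta> |r \<delta>. r \<in> St \<and> \<delta> \<in> TT m}"
    define pick where "pick \<nu> = (SOME p. fst p \<in> St \<and> snd p \<in> TT m \<and> \<nu> = addp (fst p) (snd p))" for \<nu>
    define gc where "gc \<nu> = (if \<nu> \<in> Sl then cq \<nu> else shift (snd (pick \<nu>)) (cq (fst (pick \<nu>))))" for \<nu>
    have cq_supp: "\<forall>\<mu>. \<mu> \<notin> TT k \<longrightarrow> cq \<nu> \<mu> = 0" for \<nu> using C_supp by (simp add: cq_def)
    have gc: "lead (gc \<nu>) \<nu> \<and> (\<forall>\<mu>. \<mu> \<notin> TT n \<longrightarrow> gc \<nu> \<mu> = 0) \<and> (\<forall>B\<in>X. ev n (gc \<nu>) B = 0)"
      if "\<nu> \<in> U" for \<nu>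
    proof (cases "\<nu> \<in> Sl")
      case True
      have l: "lead (gc \<nu>) \<nu>" using True wa by (simp add: gc_def cq_def Sl_def)
      have sp: "\<forall>\<mu>. \<mu> \<notin> TT n \<longrightarrow> gc \<nu> \<mu> = 0"
        using True cq_supp[of \<nu>] TT_mono[of k n] nkm by (auto simp: gc_def)
      have "ev n (gc \<nu>) = ev k (cq \<nu>)"
        using True cq_supp[of \<nu>] nkm by (simp add: gc_def ev_mono)
      then have "ev n (gc \<nu>) = Q \<nu>" by (simp add: Qev)
      then show ?thesis using l sp comb_X by (simp add: Q_def)
    next
      case False
      then have "\<exists>p. fst p \<in> St \<and> snd p \<in> TT m \<and> \<nu> = addp (fst p) (snd p)"
        using that by (auto simp: U_def)
      then have pk: "fst (pick \<nu>) \<in> St" "snd (pick \<nu>) \<in> TT m" "\<nu> = addp (fst (pick \<nu>)) (snd (pick \<nu>))"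
        unfolding pick_def by (metis (mono_tags, lifting) someI_ex)+
      define r where "r = fst (pick \<nu>)"
      define \<delta> where "\<delta> = snd (pick \<nu>)"
      have g: "gc \<nu> = shift \<delta> (cq r)" using False by (simp add: gc_def r_def \<delta>_def)
      have "r \<in> S" using pk(1) by (simp add: r_def St_def)
      then have "lead (cq r) r" using wa by (simp add: cq_def)
      then have "lead (shift \<delta> (cq r)) (addp r \<delta>)" by (rule lead_shift)
      moreover have "\<nu> = addp r \<delta>" using pk(3) by (simp add: r_def \<delta>_def)
      ultimately have l: "lead (gc \<nu>) \<nu>" using g by simp
      have sp: "\<forall>\<mu>. \<mu> \<notin> TT n \<longrightarrow> gc \<nu> \<mu> = 0"
        using g shift_supp[OF cq_supp pk(2)] nkm by (simp add: \<delta>_def)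
      have "ev n (gc \<nu>) B = 0" if "B \<in> X" for B
      proof -
        obtain x y where B: "B = (x, y)" by fastforce
        have "ev n (gc \<nu>) B = ev k (cq r) (x, y) * x ^ fst \<delta> * y ^ snd \<delta>"
          using g ev_shift[OF cq_supp pk(2)] nkm B by (simp add: \<delta>_def)
        also have "ev k (cq r) (x, y) = 0" using comb_X that B by (simp add: Qev[symmetric] Q_def)
        finally show ?thesis by simp
      qed
      then show ?thesis using l sp by blast
    qed
    have U_TT: "U \<subseteq> TT n"
    proof
      fix \<nu> assume "\<nu> \<in> U"
      then have "gc \<nu> \<nu> \<noteq> 0" using gc by (simp add: lead_def)
      then show "\<nu> \<in> TT n" using gc[OF \<open>\<nu> \<in> U\<close>] by blast
    qed
    have finU: "finite U" using U_TT by (rule finite_subset) simp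
    have bound: "card X + card U \<le> card (TT n)"
    proof (rule ccontr)
      assume nb: "\<not> (card X + card U \<le> card (TT n))"
      define I where "I = Inl ` X \<union> Inr ` U"
      define w where "w i = (case i of Inl A \<Rightarrow> wf A | Inr \<nu> \<Rightarrow> gc \<nu>)" for i
      have finI: "finite I" using assms(3) finU by (simp add: I_def)
      have "card I = card X + card U"
        unfolding I_def using assms(3) finU
        by (subst card_Un_disjoint) (auto simp: card_image)
      then have "card (TT n) < card I" using nb by simp
      from L[OF TT_finite finI this, of w]
      obtain a where a: "\<exists>i\<in>I. a i \<noteq> 0" "\<forall>\<mu>\<in>TT n. (\<Sum>i\<in>I. a i * w i \<mu>) = 0" by blast
      have fz: "(\<Sum>i\<in>I. a i * ev n (w i) z) = 0" for z
      proof -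
        have "(\<Sum>i\<in>I. a i * ev n (w i) z) = ev n (\<lambda>\<mu>. \<Sum>i\<in>I. a i * w i \<mu>) z"
          by (rule ev_lin[symmetric])
        also have "\<dots> = 0" using a(2) by (cases z) (simp add: ev_def)
        finally show ?thesis .
      qed
      have aX: "a (Inl A) = 0" if "A \<in> X" for A
      proof -
        have "0 = (\<Sum>i\<in>I. a i * ev n (w i) A)" using fz by simp
        also have "\<dots> = (\<Sum>B\<in>X. a (Inl B) * ev n (wf B) A) + (\<Sum>\<nu>\<in>U. a (Inr \<nu>) * ev n (gc \<nu>) A)"
          unfolding I_def by (simp add: sum_Inl_Inr[OF assms(3) finU] w_def)
        also have "(\<Sum>\<nu>\<in>U. a (Inr \<nu>) * ev n (gc \<nu>) A) = 0"
          using gc that by (intro sum.neutral) simp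
        also have "(\<Sum>B\<in>X. a (Inl B) * ev n (wf B) A) = a (Inl A) * ev n (wf A) A + (\<Sum>B\<in>X - {A}. a (Inl B) * ev n (wf B) A)"
          using that assms(3) by (simp add: sum.remove)
        also have "(\<Sum>B\<in>X - {A}. a (Inl B) * ev n (wf B) A) = 0"
          using wf that by (intro sum.neutral) auto
        finally show ?thesis using wf that by simp
      qed
      have "\<forall>\<mu>\<in>U. (\<Sum>\<nu>\<in>U. a (Inr \<nu>) * gc \<nu> \<mu>) = 0"
      proof
        fix \<mu> assume "\<mu> \<in> U"
        then have "0 = (\<Sum>i\<in>I. a i * w i \<mu>)" using a(2) U_TT by auto
        also have "\<dots> = (\<Sum>B\<in>X. a (Inl B) * wf B \<mu>) + (\<Sum>\<nu>\<in>U. a (Inr \<nu>) * gc \<nu> \<mu>)"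
          unfolding I_def by (simp add: sum_Inl_Inr[OF assms(3) finU] w_def)
        also have "(\<Sum>B\<in>X. a (Inl B) * wf B \<mu>) = 0" using aX by simp
        finally show "(\<Sum>\<nu>\<in>U. a (Inr \<nu>) * gc \<nu> \<mu>) = 0" by simp
      qed
      moreover have "\<forall>\<nu>\<in>U. lead (gc \<nu>) \<nu>" using gc by blast
      ultimately have "\<forall>\<nu>\<in>U. a (Inr \<nu>) = 0" using tri[OF finU, of gc "\<lambda>\<nu>. a (Inr \<nu>)"] by blast
      then show False using a(1) aX by (auto simp: I_def)
    qed
    have cU: "card Sl + (\<Sum>j\<le>m. card St + j) \<le> card U"
      unfolding U_def by (rule count_U[OF finSl finSt _ _ St_ne]) (auto simp: Sl_def St_def)
    have e1: "n - (k - 3) = m + 3" using assms(1) nkm by simp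
    have Nle: "N_dim (m + 3) \<le> N_dim n" using assms(1) nkm by (intro N_dim_mono) simp
    have cX: "card X + N_dim (m + 3) = N_dim n + 3" using assms(4) e1 Nle by (simp add: d_fun_def)
    have b2: "card U + 3 \<le> N_dim (m + 3)" using bound cX card_TT[of n] by simp
    have sm: "(\<Sum>j\<le>m. card St + j) = (m + 1) * card St + (\<Sum>j\<le>m. j)"
      by (simp add: sum.distrib)
    define t where "t = card St"
    define s' where "s' = card Sl"
    have st: "s' + t \<ge> 7" using cS cardS by (simp add: s'_def t_def)
    have "2 * (s' + ((m + 1) * t + (\<Sum>j\<le>m. j))) + 6 \<le> 2 * N_dim (m + 3)"
      using cU b2 sm by (simp add: s'_def t_def)
    then have ineq: "2 * s' + 2 * (m + 1) * t + m * (m + 1) + 6 \<le> (m + 4) * (m + 5)"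
      using gauss2[of m] N_dim2[of "m + 3"] by (simp add: algebra_simps)
    have "s' \<le> 2" using s2 by (simp add: s'_def)
    then consider "s' = 0" | "s' = 1" | "s' = 2" by linarith
    then have False
    proof cases
      case 1
      then have "7 * (m + 1) \<le> t * (m + 1)" using st by (intro mult_le_mono1) simp
      then show False using ineq m1 1 by (simp add: algebra_simps)
    next
      case 2
      then have "6 * (m + 1) \<le> t * (m + 1)" using st by (intro mult_le_mono1) simp
      then show False using ineq m1 2 by (simp add: algebra_simps)
    next
      case 3
      then have "5 * (m + 1) \<le> t * (m + 1)" using st by (intro mult_le_mono1) simp
      then show False using ineq m1 3 by (simp add: algebra_simps)
    qed
    then show ?thesis ..
  qed
qed

end
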